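(* Let $\Gamma$ be a finite directed graph. The map $\pi\circ\zeta:Y(U(1),\Gamma)\to H^1(\Gamma;\mathbb{R})$ takes values in $\mathcal{Z}_-(\Gamma)$, and $\pi\circ\zeta:Y(U(1),\Gamma)\to\mathcal{Z}_-(\Gamma)$ is a homotopy equivalence: it induces a bijection $\pi_0(Y(U(1),\Gamma))\to\mathcal{Z}_-(\Gamma)$, and each connected component of $Y(U(1),\Gamma)$ is contractible.
   Context: $\Gamma=(V,A,h,t)$ is a finite directed graph. An oriented cycle is a set $\{(a_1,\epsilon_1),\ldots,(a_k,\epsilon_k)\}\subset A\times\{\pm1\}$ such that, writing $h(-a)=t(a)$ and $t(-a)=h(a)$, we have $h(\epsilon_ia_i)=t(\epsilon_{i+1}a_{i+1})$ for $i<k$ and $h(\epsilon_ka_k)=t(\epsilon_1a_1)$, the vertices $h(\epsilon_ia_i)$ are distinct, and $a_1\ne a_2$ if $k=2$. For a group $G$, $Y(G,\Gamma)$ is the space of maps $\lambda:A\to G\setminus\{\mathrm{id}\}$ such that $\lambda(a_1)^{\epsilon_1}\cdots\lambda(a_k)^{\epsilon_k}=\mathrm{id}$ for every oriented cycle. Let $C^1(\Gamma;\mathbb{R})=\mathbb{R}^A$ be the cellular 1-cochains and $\pi:C^1(\Gamma;\mathbb{R})\to H^1(\Gamma;\mathbb{R})$ the natural surjection (dual to the inclusion $H_1(\Gamma;\mathbb{R})\hookrightarrow C_1(\Gamma;\mathbb{R})$). Let $\arg:U(1)\setminus\{1\}\to(0,1)$ be the normalized argument ($\arg(e^{2\pi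 i s})=s$ for $s\in(0,1)$), and $\zeta:Y(U(1),\Gamma)\to C^1(\Gamma;\mathbb{R})$, $\zeta(\lambda)(a)=\arg(\lambda(a))$. $\mathcal{Z}_-(\Gamma)$ is the set of points of the lattice $H^1(\Gamma;\mathbb{Z})$ lying in the interior of the zonotope $\pi([0,1]^A)\subset H^1(\Gamma;\mathbb{R})$ (equivalently, $\mathcal{Z}_-(\Gamma)=\pi((0,1)^A)\cap H^1(\Gamma;\mathbb{Z})$). *)

theory Defs
  imports "HOL-Analysis.Analysis"
begin

text \<open>A finite directed graph: vertices are a finite type 'v, arcs a finite type 'a,
  with head and tail maps hd_ tl_ :: 'a => 'v.  A signed arc is a pair (a, s) with
  s = True meaning +a and s = False meaning -a.\<close>

definition shead :: "('a \<Rightarrow> 'v) \<Rightarrow> ('a \<Rightarrow> 'v) \<Rightarrow> 'a \<times> bool \<Rightarrow> 'v" where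
  "shead h t x = (if snd x then h (fst x) else t (fst x))"

definition stail :: "('a \<Rightarrow> 'v) \<Rightarrow> ('a \<Rightarrow> 'v) \<Rightarrow> 'a \<times> bool \<Rightarrow> 'v" where
  "stail h t x = (if snd x then t (fst x) else h (fst x))"

definition oriented_cycle :: "('a \<Rightarrow> 'v) \<Rightarrow> ('a \<Rightarrow> 'v) \<Rightarrow> ('a \<times> bool) list \<Rightarrow> bool" where
  "oriented_cycle h t c \<longleftrightarrow>
     c \<noteq> [] \<and>
     (\<forall>i < length c. shead h t (c ! i) = stail h t (c ! ((i + 1) mod length c))) \<and>
     distinct (map (shead h t) c) \<and>
     (length c = 2 \<longrightarrow> fst (c ! 0) \<noteq> fst (c ! 1))"

definition spow :: "complex \<Rightarrow> bool \<Rightarrow> complex" where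
  "spow g s = (if s then g else inverse g)"

definition YU1 :: "('a::finite \<Rightarrow> 'v) \<Rightarrow> ('a \<Rightarrow> 'v) \<Rightarrow> (complex ^ 'a) set" where
  "YU1 h t = {l. (\<forall>a. cmod (l $ a) = 1 \<and> l $ a \<noteq> 1) \<and>
      (\<forall>c. oriented_cycle h t c \<longrightarrow> prod_list (map (\<lambda>x. spow (l $ fst x) (snd x)) c) = 1)}"

definition narg :: "complex \<Rightarrow> real" where
  "narg z = (THE s. s \<in> {0<..<1} \<and> z = exp (2 * pi * \<i> * complex_of_real s))"

definition zeta :: "complex ^ 'a \<Rightarrow> ('a \<Rightarrow> real)" where
  "zeta l = (\<lambda>a. narg (l $ a))"

definition H1_real :: "('a::finite \<Rightarrow> 'v) \<Rightarrow> ('a \<Rightarrow> 'v) \<Rightarrow> ('a \<Rightarrow> real) set" where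
  "H1_real h t = {z. \<forall>v. (\<Sum>a | h a = v. z a) - (\<Sum>a | t a = v. z a) = 0}"

definition H1_int :: "('a::finite \<Rightarrow> 'v) \<Rightarrow> ('a \<Rightarrow> 'v) \<Rightarrow> ('a \<Rightarrow> real) set" where
  "H1_int h t = {z \<in> H1_real h t. \<forall>a. z a \<in> \<int>}"

text \<open>H^1(Gamma;R) = Hom(H_1(Gamma;R),R); an element is represented by the linear functional
  on H_1 (extended by 0 off H_1).  pi : C^1 -> H^1 is restriction of a cochain to cycles.\<close>
definition picoh :: "('a::finite \<Rightarrow> 'v) \<Rightarrow> ('a \<Rightarrow> 'v) \<Rightarrow> ('a \<Rightarrow> real) \<Rightarrow> (('a \<Rightarrow> real) \<Rightarrow> real)" where
  "picoh h t c = (\<lambda>z. if z \<in> H1_real h t then (\<Sum>a\<in>UNIV. c a * z a) else 0)"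

definition H1coh_real :: "('a::finite \<Rightarrow> 'v) \<Rightarrow> ('a \<Rightarrow> 'v) \<Rightarrow> (('a \<Rightarrow> real) \<Rightarrow> real) set" where
  "H1coh_real h t = range (picoh h t)"

definition H1coh_int :: "('a::finite \<Rightarrow> 'v) \<Rightarrow> ('a \<Rightarrow> 'v) \<Rightarrow> (('a \<Rightarrow> real) \<Rightarrow> real) set" where
  "H1coh_int h t = {x \<in> H1coh_real h t. \<forall>z \<in> H1_int h t. x z \<in> \<int>}"

definition Zminus :: "('a::finite \<Rightarrow> 'v) \<Rightarrow> ('a \<Rightarrow> 'v) \<Rightarrow> (('a \<Rightarrow> real) \<Rightarrow> real) set" where
  "Zminus h t = picoh h t ` {c. \<forall>a. 0 < c a \<and> c a < 1} \<inter> H1coh_int h t"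

end

theory Submission
  imports Defs
begin

fun walk :: "('a \<Rightarrow> 'v) \<Rightarrow> ('a \<Rightarrow> 'v) \<Rightarrow> 'v \<Rightarrow> ('a \<times> bool) list \<Rightarrow> 'v \<Rightarrow> bool" where
  "walk h t u [] v = (u = v)"
| "walk h t u (x#w) v = (stail h t x = u \<and> walk h t (shead h t x) w v)"

definition sg :: "('a \<Rightarrow> real) \<Rightarrow> 'a \<times> bool \<Rightarrow> real" where
  "sg c x = (if snd x then c (fst x) else - c (fst x))"

definition ssum :: "('a \<Rightarrow> real) \<Rightarrow> ('a \<times> bool) list \<Rightarrow> real" where
  "ssum c w = sum_list (map (sg c) w)"

lemma ssum_simps[simp]: "ssum c [] = 0" "ssum c (x#w) = sg c x + ssum c w"
  "ssum c (w1 @ w2) = ssum c w1 + ssum c w2"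
  by (auto simp: ssum_def)

lemma walk_append: "walk h t u (w1 @ w2) v \<longleftrightarrow> (\<exists>x. walk h t u w1 x \<and> walk h t x w2 v)"
  by (induction w1 arbitrary: u) auto

lemma walk_snoc: "walk h t u (w @ [x]) v \<longleftrightarrow> walk h t u w (stail h t x) \<and> v = shead h t x"
  by (auto simp: walk_append)

definition revinv :: "('a \<times> bool) list \<Rightarrow> ('a \<times> bool) list" where
  "revinv w = rev (map (\<lambda>x. (fst x, \<not> snd x)) w)"

lemma walk_revinv: "walk h t u w v \<Longrightarrow> walk h t v (revinv w) u"
  by (induction w arbitrary: u) (auto simp: revinv_def walk_append shead_def stail_def)

lemma ssum_revinv: "ssum c (revinv w) = - ssum c w"
  by (induction w) (auto simp: revinv_def sg_def)


lemma walk_ends: "walk h t u w v \<Longrightarrow> w \<noteq> [] \<Longrightarrow> stail h t (w!0) = u \<and> shead h t (last w) = v"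
proof (induction w arbitrary: u)
  case (Cons x w) then show ?case by (cases w) auto
qed simp

lemma walk_nth: "walk h t u w v \<Longrightarrow> Suc i < length w \<Longrightarrow> shead h t (w!i) = stail h t (w ! Suc i)"
proof (induction w arbitrary: u i)
  case (Cons x w)
  show ?case
  proof (cases i)
    case 0 then show ?thesis using Cons.prems walk_ends[of h t "shead h t x" w v] by auto
  next
    case (Suc j) then show ?thesis using Cons by auto
  qed
qed simp

lemma walk_of_cyc: "w \<noteq> [] \<Longrightarrow> (\<forall>i. Suc i < length w \<longrightarrow> shead h t (w!i) = stail h t (w ! Suc i))
   \<Longrightarrow> walk h t (stail h t (w!0)) w (shead h t (last w))"
proof (induction w)
  case (Cons x w)
  show ?case
  proof (cases w)
    case Nil then show ?thesis by simp
  next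
    case (Cons y w')
    have "\<forall>i. Suc i < length w \<longrightarrow> shead h t (w!i) = stail h t (w ! Suc i)"
      using Cons.prems(2) by (metis Suc_less_eq length_Cons nth_Cons_Suc)
    then have "walk h t (stail h t (w!0)) w (shead h t (last w))" using Cons.IH Cons by simp
    moreover have "shead h t x = stail h t (w!0)" using Cons.prems(2)[rule_format, of 0] Cons by simp
    ultimately show ?thesis using Cons by simp
  qed
qed simp

lemma ocyc_walk: assumes "oriented_cycle h t w" shows "walk h t (stail h t (w!0)) w (stail h t (w!0))"
proof -
  have ne: "w \<noteq> []" and c: "\<forall>i<length w. shead h t (w ! i) = stail h t (w ! ((i + 1) mod length w))"
    using assms by (auto simp: oriented_cycle_def)
  have "\<forall>i. Suc i < length w \<longrightarrow> shead h t (w!i) = stail h t (w ! Suc i)"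
    using c by auto
  then have "walk h t (stail h t (w!0)) w (shead h t (last w))" using walk_of_cyc ne by blast
  moreover have "shead h t (last w) = stail h t (w!0)"
    using c[rule_format, of "length w - 1"] ne by (simp add: last_conv_nth)
  ultimately show ?thesis by simp
qed

definition Flat where "Flat h t c \<longleftrightarrow> (\<forall>w. oriented_cycle h t w \<longrightarrow> ssum c w \<in> \<int>)"

lemma cyc_of_walk: assumes "walk h t u w u" "w \<noteq> []" shows
  "\<forall>i<length w. shead h t (w ! i) = stail h t (w ! ((i + 1) mod length w))"
proof (intro allI impI)
  fix i assume i: "i < length w"
  show "shead h t (w ! i) = stail h t (w ! ((i + 1) mod length w))"
  proof (cases "Suc i < length w")
    case True then show ?thesis using walk_nth[OF assms(1)] by simp
  next
    case False
    then have "i = length w - 1" using i by simp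
    moreover have "Suc (length w - 1) = length w" using i by simp
    ultimately show ?thesis using walk_ends[OF assms] assms(2) by (simp add: last_conv_nth)
  qed
qed

lemma closed_walk_int:
  assumes F: "Flat h t c" shows "walk h t u w u \<Longrightarrow> ssum c w \<in> \<int>"
proof (induction "length w" arbitrary: u w rule: less_induct)
  case less
  show ?case
  proof (cases "distinct (map (shead h t) w)")
    case True
    show ?thesis
    proof (cases "w = []")
      case True then show ?thesis by simp
    next
      case ne: False
      show ?thesis
      proof (cases "length w = 2 \<and> fst (w!0) = fst (w!1)")
        case True
        then obtain x y where w: "w = [x,y]"
          by (metis (no_types, opaque_lifting) One_nat_def Suc_length_conv length_0_conv numeral_2_eq_2)
        have "fst x = fst y" using True w by simp
        moreover have "shead h t x \<noteq> shead h t y" using \<open>distinct _\<close> w by simp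
        moreover have "stail h t y = shead h t x" using less.prems w by simp
        ultimately have "snd x \<noteq> snd y"
        proof -
          have "snd x = snd y \<Longrightarrow> x = y" using \<open>fst x = fst y\<close> by (simp add: prod_eq_iff)
          then show ?thesis using \<open>shead h t x \<noteq> shead h t y\<close> by auto
        qed
        then have "ssum c w = 0" using w \<open>fst x = fst y\<close> by (auto simp: sg_def)
        then show ?thesis by simp
      next
        case False
        then have "oriented_cycle h t w"
          using True ne cyc_of_walk[OF less.prems ne] by (auto simp: oriented_cycle_def)
        then show ?thesis using F by (simp add: Flat_def)
      qed
    qed
  next
    case False
    then obtain xs y ys zs where m: "map (shead h t) w = xs @ [y] @ ys @ [y] @ zs"
      using not_distinct_decomp by blast
    then obtain w1 v1 where "w = w1 @ v1" "map (shead h t) v1 = y # ys @ y # zs"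
      by (auto simp: map_eq_append_conv)
    then obtain x v2 where w': "w = w1 @ x # v2" and hx: "shead h t x = y" and m2: "map (shead h t) v2 = ys @ y # zs"
      by (cases v1) auto
    then obtain w2 v3 where "v2 = w2 @ v3" "map (shead h t) v3 = y # zs"
      by (auto simp: map_eq_append_conv)
    then obtain x' w3 where "v2 = w2 @ x' # w3" and hx': "shead h t x' = y"
      by (cases v3) auto
    with w' have w: "w = w1 @ x # w2 @ x' # w3" by simp
    have "walk h t u (w1 @ [x]) y" "walk h t y (w2 @ [x']) y" "walk h t y w3 u"
      using less.prems hx hx' unfolding w by (auto simp: walk_append)
    then have 1: "walk h t y (w2 @ [x']) y" and 2: "walk h t y (w3 @ w1 @ [x]) y"
      by (auto simp: walk_append)
    have "ssum c (w2 @ [x']) \<in> \<int>" by (rule less.hyps[OF _ 1]) (simp add: w)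
    moreover have "ssum c (w3 @ w1 @ [x]) \<in> \<int>" by (rule less.hyps[OF _ 2]) (simp add: w)
    ultimately have "ssum c (w2 @ [x']) + ssum c (w3 @ w1 @ [x]) \<in> \<int>" by (rule Ints_add)
    then show ?thesis unfolding w by (simp add: algebra_simps)
  qed
qed

definition conn where "conn h t u v \<longleftrightarrow> (\<exists>w. walk h t u w v)"
definition root where "root h t v = (SOME u. conn h t u v)"
definition W where "W h t v = (SOME w. walk h t (root h t v) w v)"

lemma conn_refl: "conn h t v v" unfolding conn_def by (rule exI[of _ "[]"]) simp
lemma conn_trans: "conn h t u v \<Longrightarrow> conn h t v x \<Longrightarrow> conn h t u x"
  unfolding conn_def by (metis walk_append)
lemma conn_sym: "conn h t u v \<Longrightarrow> conn h t v u"
  unfolding conn_def by (metis walk_revinv)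

lemma root_eq: assumes "conn h t v v'" shows "root h t v = root h t v'"
proof -
  have "(\<lambda>u. conn h t u v) = (\<lambda>u. conn h t u v')"
  proof (rule ext, rule iffI)
    fix u
    show "conn h t u v \<Longrightarrow> conn h t u v'" by (rule conn_trans[OF _ assms])
    show "conn h t u v' \<Longrightarrow> conn h t u v" by (rule conn_trans[OF _ conn_sym[OF assms]])
  qed
  then show ?thesis unfolding root_def by simp
qed

lemma walk_W: "walk h t (root h t v) (W h t v) v"
proof -
  have "conn h t (root h t v) v" unfolding root_def by (rule someI[of _ v]) (rule conn_refl)
  then show ?thesis unfolding W_def conn_def by (rule someI_ex)
qed

definition nfun where
  "nfun h t c a = c a + ssum c (W h t (t a)) - ssum c (W h t (h a))"

lemma nfun_int: assumes F: "Flat h t c" shows "nfun h t c a \<in> \<int>"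
proof -
  have arc: "walk h t (t a) [(a, True)] (h a)" by (simp add: shead_def stail_def)
  then have "conn h t (t a) (h a)" unfolding conn_def by blast
  then have r: "root h t (t a) = root h t (h a)" by (rule root_eq)
  have "walk h t (root h t (t a)) (W h t (t a) @ [(a, True)] @ revinv (W h t (h a))) (root h t (t a))"
    using walk_W[of h t "t a"] walk_revinv[OF walk_W[of h t "h a"]] arc r
    by (auto simp: walk_append)
  from closed_walk_int[OF F this] show ?thesis
    by (simp add: nfun_def ssum_revinv sg_def algebra_simps)
qed

lemma cyc_identity:
  fixes h t :: "'a::finite \<Rightarrow> 'v::finite"
  assumes z: "z \<in> H1_real h t"
  shows "(\<Sum>a\<in>UNIV. c a * z a) = (\<Sum>a\<in>UNIV. (c a + p (t a) - p (h a)) * z a)"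
proof -
  have bd: "(\<Sum>a | h a = v. z a) = (\<Sum>a | t a = v. z a)" for v
    using z by (auto simp: H1_real_def)
  have g: "(\<Sum>a\<in>UNIV. p (g a) * z a) = (\<Sum>v\<in>UNIV. p v * (\<Sum>a | g a = v. z a))" for g :: "'a \<Rightarrow> 'v"
  proof -
    have "(\<Sum>a\<in>UNIV. p (g a) * z a) = (\<Sum>v\<in>UNIV. \<Sum>a\<in>{x\<in>UNIV. g x = v}. p (g a) * z a)"
      by (rule sum.group[symmetric]) auto
    also have "\<dots> = (\<Sum>v\<in>UNIV. p v * (\<Sum>a | g a = v. z a))"
      by (simp add: sum_distrib_left)
    finally show ?thesis .
  qed
  have "(\<Sum>a\<in>UNIV. (c a + p (t a) - p (h a)) * z a)
      = (\<Sum>a\<in>UNIV. c a * z a) + (\<Sum>a\<in>UNIV. p (t a) * z a) - (\<Sum>a\<in>UNIV. p (h a) * z a)"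
    by (simp add: algebra_simps sum.distrib sum_subtractf)
  also have "(\<Sum>a\<in>UNIV. p (t a) * z a) = (\<Sum>a\<in>UNIV. p (h a) * z a)"
    unfolding g bd ..
  finally show ?thesis by simp
qed

definition Integral where
  "Integral h t c \<longleftrightarrow> (\<forall>z\<in>H1_int h t. (\<Sum>a\<in>UNIV. c a * z a) \<in> \<int>)"

lemma picoh_nfun:
  fixes h t :: "'a::finite \<Rightarrow> 'v::finite"
  shows "picoh h t c = picoh h t (nfun h t c)"
proof (rule ext)
  fix z
  show "picoh h t c z = picoh h t (nfun h t c) z"
  proof (cases "z \<in> H1_real h t")
    case True
    have "(\<Sum>a\<in>UNIV. c a * z a) = (\<Sum>a\<in>UNIV. nfun h t c a * z a)"
      unfolding nfun_def by (rule cyc_identity[OF True])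
    then show ?thesis using True by (simp add: picoh_def)
  next
    case False then show ?thesis by (simp add: picoh_def)
  qed
qed

lemma Flat_Integral:
  fixes h t :: "'a::finite \<Rightarrow> 'v::finite"
  assumes "Flat h t c" shows "Integral h t c"
  unfolding Integral_def
proof
  fix z assume z: "z \<in> H1_int h t"
  then have "(\<Sum>a\<in>UNIV. c a * z a) = (\<Sum>a\<in>UNIV. nfun h t c a * z a)"
    unfolding nfun_def by (intro cyc_identity) (auto simp: H1_int_def)
  also have "\<dots> \<in> \<int>"
    using z nfun_int[OF assms] by (intro Ints_sum Ints_mult) (auto simp: H1_int_def)
  finally show "(\<Sum>a\<in>UNIV. c a * z a) \<in> \<int>" .
qed

definition ind where "ind b = (if b then 1 else (0::real))"
definition sgn1 :: "'a \<times> bool \<Rightarrow> real" where "sgn1 x = (if snd x then 1 else -1)"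
definition zw where "zw w a = sum_list (map (\<lambda>x. if fst x = a then sgn1 x else 0) w)"

lemma sum_list_swap: "finite A \<Longrightarrow> (\<Sum>a\<in>A. sum_list (map (f a) w)) = sum_list (map (\<lambda>x. \<Sum>a\<in>A. f a x) w)"
  by (induction w) (auto simp: sum.distrib)

lemma walk_bd: "walk h t u w u' \<Longrightarrow>
  sum_list (map (\<lambda>x. ind (shead h t x = v) - ind (stail h t x = v)) w) = ind (u' = v) - ind (u = v)"
  by (induction w arbitrary: u) auto

lemma zw_Cons: "zw (x#w) a = (if fst x = a then sgn1 x else 0) + zw w a"
  by (simp add: zw_def)

lemma sum_zw_Cons: "(\<Sum>a\<in>S. zw (x#w) a) = (if fst x \<in> S then sgn1 x else 0) + (\<Sum>a\<in>S. zw w a)"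
  if "finite S"
  using that by (simp add: zw_Cons sum.distrib)

lemma zw_bd:
  fixes h t :: "'a::finite \<Rightarrow> 'v::finite"
  shows "(\<Sum>a | h a = v. zw w a) - (\<Sum>a | t a = v. zw w a)
      = sum_list (map (\<lambda>x. ind (shead h t x = v) - ind (stail h t x = v)) w)"
proof (induction w)
  case Nil then show ?case by (simp add: zw_def)
next
  case (Cons x w)
  have "(\<Sum>a | h a = v. zw (x#w) a) - (\<Sum>a | t a = v. zw (x#w) a)
     = (if h (fst x) = v then sgn1 x else 0) - (if t (fst x) = v then sgn1 x else 0)
       + ((\<Sum>a | h a = v. zw w a) - (\<Sum>a | t a = v. zw w a))"
    by (simp add: sum_zw_Cons)
  also have "(if h (fst x) = v then sgn1 x else 0) - (if t (fst x) = v then sgn1 x else 0)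
     = ind (shead h t x = v) - ind (stail h t x = v)"
    by (simp add: ind_def sgn1_def shead_def stail_def)
  finally show ?case using Cons by simp
qed

lemma zw_H1:
  fixes h t :: "'a::finite \<Rightarrow> 'v::finite"
  assumes "walk h t u w u" shows "zw w \<in> H1_int h t"
proof -
  have "(\<Sum>a | h a = v. zw w a) - (\<Sum>a | t a = v. zw w a) = 0" for v
  proof -
    have "(\<Sum>a | h a = v. zw w a) - (\<Sum>a | t a = v. zw w a)
      = sum_list (map (\<lambda>x. ind (shead h t x = v) - ind (stail h t x = v)) w)"
      by (rule zw_bd)
    also have "\<dots> = 0" using walk_bd[OF assms] by simp
    finally show ?thesis .
  qed
  moreover have "zw w a \<in> \<int>" for a
    unfolding zw_def by (induction w) (auto simp: sgn1_def)
  ultimately show ?thesis by (auto simp: H1_int_def H1_real_def)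
qed

lemma zw_sum: "(\<Sum>a\<in>(UNIV::'a::finite set). c a * zw w a) = ssum c w"
  by (induction w) (auto simp: zw_def ssum_def sg_def sgn1_def sum.distrib distrib_left if_distrib cong: if_cong)

lemma Integral_Flat:
  fixes h t :: "'a::finite \<Rightarrow> 'v::finite"
  assumes "Integral h t c" shows "Flat h t c"
  unfolding Flat_def
proof (intro allI impI)
  fix w assume "oriented_cycle h t w"
  from zw_H1[OF ocyc_walk[OF this]] assms show "ssum c w \<in> \<int>"
    unfolding Integral_def zw_sum[symmetric] by blast
qed

definition ex :: "real \<Rightarrow> complex" where "ex s = exp (2 * pi * \<i> * complex_of_real s)"

lemma ex_one_iff: "ex s = 1 \<longleftrightarrow> s \<in> \<int>"
proof
  assume "ex s = 1"
  then have "exp (2 * pi * \<i> * complex_of_real s) = exp 0" by (simp add: ex_def)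
  then obtain n :: int where "2 * pi * \<i> * complex_of_real s = of_int (2*n) * pi * \<i>"
    unfolding exp_eq by auto
  then have "complex_of_real s = of_int n"
    by (simp add: field_simps)
  then have "s = of_int n" by (metis of_real_eq_iff of_real_of_int_eq)
  then show "s \<in> \<int>" by simp
next
  assume "s \<in> \<int>"
  then obtain n where "s = of_int n" by (auto elim: Ints_cases)
  then have "2 * pi * \<i> * complex_of_real s = 0 + of_int (2*n) * pi * \<i>" by simp
  then have "exp (2 * pi * \<i> * complex_of_real s) = exp 0" unfolding exp_eq by blast
  then show "ex s = 1" by (simp add: ex_def)
qed

lemma ex_add: "ex (s + s') = ex s * ex s'"
  by (simp add: ex_def distrib_left exp_add)

lemma ex_minus: "ex (- s) = inverse (ex s)"
  by (simp add: ex_def exp_minus)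

lemma ex_eq_iff: "ex s = ex s' \<longleftrightarrow> s - s' \<in> \<int>"
proof -
  have e: "ex s = ex (s - s') * ex s'" by (simp add: ex_add[symmetric])
  have "ex s' \<noteq> 0" by (simp add: ex_def)
  then have "ex s = ex s' \<longleftrightarrow> ex (s - s') = 1" unfolding e
    by (metis mult_cancel_right mult_1)
  then show ?thesis by (simp add: ex_one_iff)
qed

lemma cmod_ex: "cmod (ex s) = 1"
  unfolding ex_def by (metis mult.commute norm_exp_i_times of_real_mult of_real_numeral mult.assoc)

lemma narg_ex: assumes "0 < s" "s < 1" shows "narg (ex s) = s"
  unfolding narg_def
proof (rule the_equality)
  show "s \<in> {0<..<1} \<and> ex s = exp (2 * pi * \<i> * complex_of_real s)" using assms by (simp add: ex_def)
next
  fix s' assume "s' \<in> {0<..<1} \<and> ex s = exp (2 * pi * \<i> * complex_of_real s')"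
  then have "s' \<in> {0<..<1}" "ex s' = ex s" by (auto simp: ex_def)
  then have "s' - s \<in> \<int>" "\<bar>s' - s\<bar> < 1" using assms by (auto simp: ex_eq_iff)
  then show "s' = s" using Ints_nonzero_abs_less1 by fastforce
qed

lemma ex_ne1: "0 < s \<Longrightarrow> s < 1 \<Longrightarrow> ex s \<noteq> 1"
proof
  assume "0 < s" "s < 1" "ex s = 1"
  then have "s \<in> \<int>" by (simp add: ex_one_iff)
  then obtain n where "s = of_int n" by (auto elim: Ints_cases)
  with \<open>0 < s\<close> \<open>s < 1\<close> show False by simp
qed

lemma narg_props:
  assumes "cmod z = 1" "z \<noteq> 1"
  shows "0 < narg z \<and> narg z < 1 \<and> ex (narg z) = z \<and> narg z = Arg (- z) / (2*pi) + 1/2"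
proof -
  define th where "th = Arg (- z)"
  have nz: "- z \<noteq> 0" using assms by auto
  have mz: "- z = exp (\<i> * th)" using Arg_eq[OF nz] assms by (simp add: th_def)
  have "th \<noteq> pi"
  proof
    assume "th = pi"
    then have "-z \<in> \<real>" "Re (-z) < 0" using Arg_eq_pi_iff th_def by auto
    then obtain q where q: "-z = of_real q" "q < 0" by (metis Reals_cases Re_complex_of_real)
    define r where "r = - q"
    have "z = - of_real q" using q(1) by (metis add.inverse_inverse)
    then have r: "z = of_real r" "r > 0" using q by (auto simp: r_def)
    then have "r = 1" using assms(1) by simp
    then show False using r assms(2) by simp
  qed
  then have b: "- pi < th" "th < pi" using Arg_bounded[of "-z"] th_def by auto
  define s where "s = th / (2*pi) + 1/2"
  have s01: "0 < s" "s < 1" using b by (auto simp: s_def field_simps)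
  have pn: "complex_of_real pi \<noteq> 0" by simp
  have "2 * pi * \<i> * complex_of_real s = \<i> * th + \<i> * pi"
    unfolding s_def using pn by (simp add: field_simps)
  then have "ex s = exp (\<i> * th + \<i> * pi)"
    unfolding ex_def by simp
  also have "\<dots> = z" using mz by (simp add: exp_add) (metis add.inverse_inverse)
  finally have es: "ex s = z" .
  have "narg z = s" using narg_ex[OF s01] es by simp
  then show ?thesis using s01 es by (simp add: s_def th_def)
qed

lemma spow_ex: "spow (ex s) b = ex (if b then s else - s)"
  by (simp add: spow_def ex_minus)

lemma prod_ex: "prod_list (map (\<lambda>x. spow (ex (c (fst x))) (snd x)) w) = ex (ssum c w)"
proof (induction w)
  case Nil then show ?case by (simp add: ex_def)
next
  case (Cons x w) then show ?case by (simp add: spow_ex ex_add sg_def)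
qed

definition E :: "real ^ 'a \<Rightarrow> complex ^ 'a" where "E c = (\<chi> a. ex (c $ a))"
definition Z :: "complex ^ 'a \<Rightarrow> real ^ 'a" where "Z l = (\<chi> a. narg (l $ a))"

lemma Z_zeta: "($) (Z l) = zeta l" by (simp add: Z_def zeta_def fun_eq_iff)

lemma Y1:
  assumes "l \<in> YU1 h t"
  shows "(\<forall>a. 0 < zeta l a \<and> zeta l a < 1) \<and> Flat h t (zeta l) \<and> E (Z l) = l"
proof -
  have u: "cmod (l $ a) = 1" "l $ a \<noteq> 1" for a using assms by (auto simp: YU1_def)
  have ex: "ex (zeta l a) = l $ a" for a
    using narg_props[OF u, THEN conjunct2, THEN conjunct2, THEN conjunct1] by (simp add: zeta_def)
  have bd: "0 < zeta l a \<and> zeta l a < 1" for a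
    using narg_props[OF u] unfolding zeta_def by blast
  have "Flat h t (zeta l)"
    unfolding Flat_def
  proof (intro allI impI)
    fix w assume "oriented_cycle h t w"
    then have "prod_list (map (\<lambda>x. spow (l $ fst x) (snd x)) w) = 1" using assms by (auto simp: YU1_def)
    then have "ex (ssum (zeta l) w) = 1" using prod_ex[of "zeta l" w] by (simp add: ex)
    then show "ssum (zeta l) w \<in> \<int>" by (simp add: ex_one_iff)
  qed
  moreover have "E (Z l) = l" by (simp add: E_def Z_def vec_eq_iff ex[unfolded zeta_def])
  ultimately show ?thesis using bd by blast
qed

lemma Y2:
  assumes "\<forall>a. 0 < c $ a \<and> c $ a < 1" "Flat h t (($) c)"
  shows "E c \<in> YU1 h t \<and> Z (E c) = c"
proof -
  have Ea: "E c $ a = ex (c $ a)" for a by (simp add: E_def)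
  have "E c \<in> YU1 h t"
    unfolding YU1_def
  proof (intro CollectI conjI allI impI)
    fix a show "cmod (E c $ a) = 1" unfolding Ea by (rule cmod_ex)
    show "E c $ a \<noteq> 1" unfolding Ea using assms(1) by (intro ex_ne1) auto
  next
    fix w assume "oriented_cycle h t w"
    then have i: "ssum (($) c) w \<in> \<int>" using assms(2) unfolding Flat_def by blast
    have "prod_list (map (\<lambda>x. spow (E c $ fst x) (snd x)) w)
        = prod_list (map (\<lambda>x. spow (ex (c $ fst x)) (snd x)) w)" by (simp only: Ea)
    also have "\<dots> = ex (ssum (($) c) w)" by (rule prod_ex)
    also have "\<dots> = 1" using i by (simp only: ex_one_iff)
    finally show "prod_list (map (\<lambda>x. spow (E c $ fst x) (snd x)) w) = 1" .
  qed
  moreover have "Z (E c) = c"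
    unfolding vec_eq_iff
  proof
    fix a
    have "Z (E c) $ a = narg (ex (c $ a))" by (simp add: Z_def Ea)
    also have "\<dots> = c $ a" using assms(1) by (intro narg_ex) auto
    finally show "Z (E c) $ a = c $ a" .
  qed
  ultimately show ?thesis by simp
qed

lemma cont_narg: "continuous_on (YU1 h t) (\<lambda>m. narg (m $ a))"
proof (rule continuous_on_eq[where f = "\<lambda>m. Arg (- (m $ a)) / (2*pi) + 1/2"])
  show "Arg (- (m $ a)) / (2*pi) + 1/2 = narg (m $ a)" if "m \<in> YU1 h t" for m
  proof -
    have "cmod (m $ a) = 1" "m $ a \<noteq> 1" using that by (auto simp: YU1_def)
    from narg_props[OF this] show ?thesis by linarith
  qed
  show "continuous_on (YU1 h t) (\<lambda>m. Arg (- (m $ a)) / (2*pi) + 1/2)"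
  proof (intro continuous_at_imp_continuous_on ballI)
    fix m assume m: "m \<in> YU1 h t"
    have "- (m $ a) \<notin> \<real>\<^sub>\<le>\<^sub>0"
    proof
      assume "- (m $ a) \<in> \<real>\<^sub>\<le>\<^sub>0"
      then obtain r where r: "- (m $ a) = of_real r" "r \<le> 0" by (auto simp: nonpos_Reals_def)
      have "cmod (m $ a) = 1" "m $ a \<noteq> 1" using m by (auto simp: YU1_def)
      moreover have "m $ a = of_real (- r)" using r(1) by (simp add: minus_equation_iff)
      ultimately have "\<bar>- r\<bar> = 1" "m $ a \<noteq> 1" by auto
      then show False using r(2) \<open>m $ a = of_real (- r)\<close> by auto
    qed
    then have c1: "isCont Arg (- (m $ a))" by (rule continuous_at_Arg)
    have c2: "isCont (\<lambda>m. - (m $ a)) m" by (intro continuous_intros)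
    have "isCont (\<lambda>m. Arg (- (m $ a))) m" using isCont_o2[OF c2 c1] .
    then show "isCont (\<lambda>m. Arg (- (m $ a)) / (2*pi) + 1/2) m" by (intro continuous_intros) auto
  qed
qed

lemma cont_E: "continuous_on S E"
  unfolding E_def
proof (rule continuous_on_vec_lambda)
  fix a
  have "continuous_on S (\<lambda>c::real^'a. c $ a)"
    by (rule continuous_on_component[OF continuous_on_id])
  then have "continuous_on S (\<lambda>c::real^'a. complex_of_real (c $ a))"
    by (rule continuous_on_of_real)
  then have "continuous_on S (\<lambda>c::real^'a. exp (2 * pi * \<i> * complex_of_real (c $ a)))"
    by (intro continuous_on_exp continuous_on_mult continuous_on_const)
  then show "continuous_on S (\<lambda>c::real^'a. ex (c $ a))" by (simp add: ex_def)
qed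

lemma cont_Z: "continuous_on (YU1 h t) Z"
  unfolding Z_def by (intro continuous_on_vec_lambda cont_narg)

lemma coh_int_Integral:
  fixes h t :: "'a::finite \<Rightarrow> 'v::finite"
  assumes "picoh h t c \<in> H1coh_int h t" shows "Integral h t c"
  unfolding Integral_def
proof
  fix z assume z: "z \<in> H1_int h t"
  then have "z \<in> H1_real h t" by (simp add: H1_int_def)
  then have "picoh h t c z = (\<Sum>a\<in>UNIV. c a * z a)" by (simp add: picoh_def)
  moreover have "picoh h t c z \<in> \<int>" using assms z by (simp add: H1coh_int_def)
  ultimately show "(\<Sum>a\<in>UNIV. c a * z a) \<in> \<int>" by simp
qed

lemma Integral_coh_int:
  fixes h t :: "'a::finite \<Rightarrow> 'v::finite"
  assumes "Integral h t c" shows "picoh h t c \<in> H1coh_int h t"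
  unfolding H1coh_int_def H1coh_real_def
proof (intro CollectI conjI ballI)
  show "picoh h t c \<in> range (picoh h t)" by simp
  fix z assume z: "z \<in> H1_int h t"
  then have "z \<in> H1_real h t" by (simp add: H1_int_def)
  then have "picoh h t c z = (\<Sum>a\<in>UNIV. c a * z a)" by (simp add: picoh_def)
  then show "picoh h t c z \<in> \<int>" using assms z by (simp add: Integral_def)
qed

lemma part1:
  fixes h t :: "'a::finite \<Rightarrow> 'v::finite"
  assumes "l \<in> YU1 h t" shows "picoh h t (zeta l) \<in> Zminus h t"
proof -
  from Y1[OF assms] have c: "\<forall>a. 0 < zeta l a \<and> zeta l a < 1" and F: "Flat h t (zeta l)" by auto
  have "picoh h t (zeta l) \<in> H1coh_int h t" by (rule Integral_coh_int[OF Flat_Integral[OF F]])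
  moreover have "picoh h t (zeta l) \<in> picoh h t ` {c. \<forall>a. 0 < c a \<and> c a < 1}" using c by blast
  ultimately show ?thesis by (simp add: Zminus_def)
qed

lemma part2:
  fixes h t :: "'a::finite \<Rightarrow> 'v::finite"
  assumes "x \<in> Zminus h t" shows "\<exists>l \<in> YU1 h t. picoh h t (zeta l) = x"
proof -
  obtain c where c: "\<forall>a. 0 < c a \<and> c a < 1" and x: "x = picoh h t c" and xi: "x \<in> H1coh_int h t"
    using assms by (auto simp: Zminus_def)
  define cv :: "real^'a" where "cv = (\<chi> a. c a)"
  have cc: "($) cv = c" by (simp add: cv_def fun_eq_iff)
  have F: "Flat h t (($) cv)" unfolding cc using xi x by (intro Integral_Flat coh_int_Integral) simp
  have "\<forall>a. 0 < cv $ a \<and> cv $ a < 1" using c by (simp add: cv_def)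
  from Y2[OF this F] have "E cv \<in> YU1 h t" "Z (E cv) = cv" by auto
  moreover have "zeta (E cv) = c" using \<open>Z (E cv) = cv\<close> Z_zeta[of "E cv"] cc by simp
  ultimately show ?thesis using x by blast
qed

lemma cont_ssum: "continuous_on (YU1 h t) (\<lambda>m. ssum (zeta m) w)"
proof (induction w)
  case Nil then show ?case by (simp add: continuous_on_const)
next
  case (Cons x w)
  have "continuous_on (YU1 h t) (\<lambda>m. sg (zeta m) x)"
  proof (cases "snd x")
    case True then show ?thesis by (simp add: sg_def zeta_def cont_narg)
  next
    case False then show ?thesis by (simp add: sg_def zeta_def cont_narg continuous_on_minus)
  qed
  then show ?case using Cons by (simp add: continuous_on_add)
qed

lemma cont_nfun: "continuous_on (YU1 h t) (\<lambda>m. nfun h t (zeta m) a)"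
  unfolding nfun_def
  by (intro continuous_on_add continuous_on_diff cont_ssum) (simp add: zeta_def cont_narg)

lemma comp_sub:
  fixes h t :: "'a::finite \<Rightarrow> 'v::finite"
  assumes l: "l \<in> YU1 h t" and m: "m \<in> connected_component_set (YU1 h t) l"
  shows "picoh h t (zeta m) = picoh h t (zeta l)"
proof -
  let ?C = "connected_component_set (YU1 h t) l"
  have CY: "?C \<subseteq> YU1 h t" by (rule connected_component_subset)
  have lC: "l \<in> ?C" using l by (simp add: connected_component_refl)
  have "nfun h t (zeta m) a = nfun h t (zeta l) a" for a
  proof -
    let ?f = "\<lambda>m. nfun h t (zeta m) a"
    have fi: "?f m' \<in> \<int>" if "m' \<in> ?C" for m'
      using Y1[of m' h t] that CY by (auto intro: nfun_int)
    have "?f constant_on ?C"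
    proof (rule continuous_discrete_range_constant)
      show "connected ?C" by simp
      show "continuous_on ?C ?f" by (rule continuous_on_subset[OF cont_nfun CY])
      fix x assume x: "x \<in> ?C"
      show "\<exists>e>0. \<forall>y. y \<in> ?C \<and> ?f y \<noteq> ?f x \<longrightarrow> e \<le> norm (?f y - ?f x)"
      proof (intro exI[of _ 1] conjI allI impI)
        fix y assume y: "y \<in> ?C \<and> ?f y \<noteq> ?f x"
        then have "?f y - ?f x \<in> \<int>" "?f y - ?f x \<noteq> 0" using fi x by auto
        then have "1 \<le> \<bar>?f y - ?f x\<bar>" by (rule Ints_nonzero_abs_ge1)
        then show "1 \<le> norm (?f y - ?f x)" by simp
      qed simp
    qed
    then show ?thesis using m lC by (auto simp: constant_on_def)
  qed
  then have "nfun h t (zeta m) = nfun h t (zeta l)" by (simp add: fun_eq_iff)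
  then show ?thesis by (metis picoh_nfun)
qed

definition K0 :: "('a::finite \<Rightarrow> 'v) \<Rightarrow> ('a \<Rightarrow> 'v) \<Rightarrow> (('a \<Rightarrow> real) \<Rightarrow> real) \<Rightarrow> (real^'a) set" where
  "K0 h t x = {c. (\<forall>a. 0 < c $ a \<and> c $ a < 1) \<and> picoh h t (($) c) = x}"

lemma convex_K0: "convex (K0 h t x)"
proof (rule convexI)
  fix c1 c2 :: "real^'a" and u v :: real
  assume c1: "c1 \<in> K0 h t x" and c2: "c2 \<in> K0 h t x" and u: "0 \<le> u" and v: "0 \<le> v" and uv: "u + v = 1"
  have b: "0 < (u *\<^sub>R c1 + v *\<^sub>R c2) $ a \<and> (u *\<^sub>R c1 + v *\<^sub>R c2) $ a < 1" for a
  proof -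
    have "0 < c1 $ a" "c1 $ a < 1" "0 < c2 $ a" "c2 $ a < 1" using c1 c2 by (auto simp: K0_def)
    then have "u * c1 $ a + v * c2 $ a < 1" "u * (- c1 $ a) + v * (- c2 $ a) < 0"
      using convex_bound_lt[of "c1 $ a" 1 "c2 $ a" u v] convex_bound_lt[of "- c1 $ a" 0 "- c2 $ a" u v] u v uv
      by auto
    then show ?thesis by (simp add: algebra_simps)
  qed
  have p: "picoh h t (($) (u *\<^sub>R c1 + v *\<^sub>R c2)) = x"
  proof (rule ext)
    fix z
    show "picoh h t (($) (u *\<^sub>R c1 + v *\<^sub>R c2)) z = x z"
    proof (cases "z \<in> H1_real h t")
      case True
      have e1: "(\<Sum>a\<in>UNIV. c1 $ a * z a) = x z"
        using c1 True unfolding K0_def picoh_def by (auto dest: fun_cong[of _ _ z])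
      have e2: "(\<Sum>a\<in>UNIV. c2 $ a * z a) = x z"
        using c2 True unfolding K0_def picoh_def by (auto dest: fun_cong[of _ _ z])
      have "(\<Sum>a\<in>UNIV. (u *\<^sub>R c1 + v *\<^sub>R c2) $ a * z a)
          = u * (\<Sum>a\<in>UNIV. c1 $ a * z a) + v * (\<Sum>a\<in>UNIV. c2 $ a * z a)"
        by (simp add: sum_distrib_left sum.distrib algebra_simps)
      also have "\<dots> = x z" using e1 e2 uv by (simp add: algebra_simps) (metis distrib_right mult_1)
      finally show ?thesis using True by (simp add: picoh_def)
    next
      case False
      obtain c where "c \<in> K0 h t x" using c1 by blast
      then have "x z = 0" using False unfolding K0_def picoh_def by (auto dest: fun_cong[of _ _ z])
      then show ?thesis using False by (simp add: picoh_def)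
    qed
  qed
  show "u *\<^sub>R c1 + v *\<^sub>R c2 \<in> K0 h t x" using b p by (simp add: K0_def)
qed

lemma fiber_eq:
  fixes h t :: "'a::finite \<Rightarrow> 'v::finite"
  assumes l: "l \<in> YU1 h t"
  shows "{m \<in> YU1 h t. picoh h t (zeta m) = picoh h t (zeta l)} = E ` K0 h t (picoh h t (zeta l))"
proof
  let ?x = "picoh h t (zeta l)"
  show "{m \<in> YU1 h t. picoh h t (zeta m) = ?x} \<subseteq> E ` K0 h t ?x"
  proof
    fix m assume m: "m \<in> {m \<in> YU1 h t. picoh h t (zeta m) = ?x}"
    then have my: "m \<in> YU1 h t" and mx: "picoh h t (zeta m) = ?x" by auto
    from Y1[OF my] have "Z m \<in> K0 h t ?x" "E (Z m) = m"
      using mx by (auto simp: K0_def Z_zeta)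
    then show "m \<in> E ` K0 h t ?x" by (metis image_eqI)
  qed
  show "E ` K0 h t ?x \<subseteq> {m \<in> YU1 h t. picoh h t (zeta m) = ?x}"
  proof
    fix m assume "m \<in> E ` K0 h t ?x"
    then obtain c where c: "c \<in> K0 h t ?x" and mE: "m = E c" by blast
    have cb: "\<forall>a. 0 < c $ a \<and> c $ a < 1" and cx: "picoh h t (($) c) = ?x" using c by (auto simp: K0_def)
    have "?x \<in> H1coh_int h t" using part1[OF l] by (simp add: Zminus_def)
    then have "Flat h t (($) c)" using cx by (intro Integral_Flat coh_int_Integral) simp
    from Y2[OF cb this] have "E c \<in> YU1 h t" "Z (E c) = c" by auto
    moreover have "zeta (E c) = ($) c" using \<open>Z (E c) = c\<close> Z_zeta[of "E c"] by simp
    ultimately show "m \<in> {m \<in> YU1 h t. picoh h t (zeta m) = ?x}" using mE cx by simp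
  qed
qed

theorem proposition3p6:
  fixes h t :: "'a::finite \<Rightarrow> 'v::finite"
  shows "(\<forall>l \<in> YU1 h t. picoh h t (zeta l) \<in> Zminus h t)
    \<and> (\<forall>x \<in> Zminus h t. \<exists>l \<in> YU1 h t. picoh h t (zeta l) = x)
    \<and> (\<forall>l \<in> YU1 h t. connected_component_set (YU1 h t) l
          = {m \<in> YU1 h t. picoh h t (zeta m) = picoh h t (zeta l)})
    \<and> (\<forall>l \<in> YU1 h t. contractible (connected_component_set (YU1 h t) l))"
proof -
  have P3: "connected_component_set (YU1 h t) l
          = {m \<in> YU1 h t. picoh h t (zeta m) = picoh h t (zeta l)}" if l: "l \<in> YU1 h t" for l
  proof
    show "connected_component_set (YU1 h t) l \<subseteq> {m \<in> YU1 h t. picoh h t (zeta m) = picoh h t (zeta l)}"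
      using comp_sub[OF l] connected_component_subset by blast
    let ?F = "{m \<in> YU1 h t. picoh h t (zeta m) = picoh h t (zeta l)}"
    have "connected ?F" unfolding fiber_eq[OF l]
      by (rule connected_continuous_image[OF cont_E convex_connected[OF convex_K0]])
    moreover have "l \<in> ?F" using l by simp
    ultimately show "?F \<subseteq> connected_component_set (YU1 h t) l"
      by (intro connected_component_maximal) auto
  qed
  have P4: "contractible (connected_component_set (YU1 h t) l)" if l: "l \<in> YU1 h t" for l
  proof -
    let ?K = "K0 h t (picoh h t (zeta l))"
    have C: "connected_component_set (YU1 h t) l = E ` ?K" using P3[OF l] fiber_eq[OF l] by simp
    have EY: "E ` ?K \<subseteq> YU1 h t" using fiber_eq[OF l] by blast
    have "homeomorphism ?K (E ` ?K) E Z"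
    proof (rule homeomorphismI)
      show "continuous_on ?K E" by (rule cont_E)
      show "continuous_on (E ` ?K) Z" by (rule continuous_on_subset[OF cont_Z EY])
      show "E ` ?K \<subseteq> E ` ?K" by simp
      show ZK: "Z (E x) = x" if "x \<in> ?K" for x
      proof -
        have cb: "\<forall>a. 0 < x $ a \<and> x $ a < 1" using that by (simp add: K0_def)
        show ?thesis unfolding vec_eq_iff
        proof
          fix a
          have "Z (E x) $ a = narg (ex (x $ a))" by (simp add: Z_def E_def)
          also have "\<dots> = x $ a" using cb by (intro narg_ex) auto
          finally show "Z (E x) $ a = x $ a" .
        qed
      qed
      show "Z ` E ` ?K \<subseteq> ?K" using ZK by auto
      show "E (Z y) = y" if "y \<in> E ` ?K" for y
        using Y1[of y h t] EY that by auto
    qed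
    then have "?K homeomorphic (E ` ?K)" unfolding homeomorphic_def by blast
    moreover have "contractible ?K" by (rule convex_imp_contractible[OF convex_K0])
    ultimately show ?thesis unfolding C using homeomorphic_contractible_eq by blast
  qed
  show ?thesis using part1 part2 P3 P4 by blast
qed

end
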